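(* For all positive integers $m$ and $n$ and every sequence $(a_i\colon i\in\mathbb{N})$ of positive integers, there is a bound $N$ (depending only on $m$, $n$ and the sequence) such that every strictly increasing chain $S_0\subsetneq S_1\subsetneq S_2\subsetneq\cdots$ of antichains $S_k$ of $(\mathbb{N}^m\times n,\le)$ satisfying $S_k\subseteq\{(\xi,h)\colon|\xi|\le a_k\}$ for each $k$ has length at most $N$.
   Context: $n$ denotes $\{0,\dots,n-1\}$; $\le$ is the product (componentwise) order on $\mathbb{N}^m\times n$; for $\xi\in\mathbb{N}^m$, $|\xi|=\sum_{i<m}\xi(i)$. An antichain is a set of pairwise $\le$-incomparable elements. *)

theory Defs
  imports Main
begin

text \<open>Elements of N^m x n are pairs (xi, h) with xi :: nat => nat vanishing
  outside {0..<m} and h < n.\<close>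

definition grid :: "nat \<Rightarrow> nat \<Rightarrow> ((nat \<Rightarrow> nat) \<times> nat) set" where
  "grid m n = {(xi, h). (\<forall>i\<ge>m. xi i = 0) \<and> h < n}"

definition prod_le :: "nat \<Rightarrow> (nat \<Rightarrow> nat) \<times> nat \<Rightarrow> (nat \<Rightarrow> nat) \<times> nat \<Rightarrow> bool" where
  "prod_le m x y \<longleftrightarrow> (\<forall>i<m. fst x i \<le> fst y i) \<and> snd x \<le> snd y"

definition weight :: "nat \<Rightarrow> (nat \<Rightarrow> nat) \<Rightarrow> nat" where
  "weight m xi = (\<Sum>i<m. xi i)"

definition antichain_in :: "nat \<Rightarrow> ((nat \<Rightarrow> nat) \<times> nat) set \<Rightarrow> bool" where
  "antichain_in m S \<longleftrightarrow> (\<forall>x\<in>S. \<forall>y\<in>S. x \<noteq> y \<longrightarrow> \<not> prod_le m x y)"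

end

theory Submission
  imports Defs Complex_Main
begin

lemma nat_mono_sub:
  fixes s :: "nat \<Rightarrow> nat"
  shows "\<exists>g::nat\<Rightarrow>nat. strict_mono g \<and> (\<forall>a b. a \<le> b \<longrightarrow> s (g a) \<le> s (g b))"
proof -
  obtain f :: "nat \<Rightarrow> nat" where f: "strict_mono f" "monoseq (\<lambda>n. s (f n))" using seq_monosub by blast
  show ?thesis
  proof (cases "\<forall>a b. a \<le> b \<longrightarrow> s (f a) \<le> s (f b)")
    case True then show ?thesis using f by blast
  next
    case False
    then have dec: "\<forall>a b. a \<le> b \<longrightarrow> s (f b) \<le> s (f a)" using f(2) unfolding monoseq_def by blast
    obtain N where N: "\<forall>k. s (f N) \<le> s (f k)"
      using ex_has_least_nat[where P="\<lambda>_. True" and m="\<lambda>k. s (f k)"] by auto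
    have const: "\<forall>k\<ge>N. s (f k) = s (f N)" 
    proof (intro allI impI)
      fix k assume "N \<le> k"
      then have "s (f k) \<le> s (f N)" using dec by blast
      then show "s (f k) = s (f N)" using N[rule_format, of k] by simp
    qed
    define g where "g = (\<lambda>k. f (k + N))"
    have "strict_mono g" unfolding strict_mono_def
    proof (intro allI impI)
      fix x y :: nat assume "x < y"
      then have "x + N < y + N" by simp
      then show "g x < g y" unfolding g_def using f(1) by (simp add: strict_mono_less)
    qed
    moreover have "\<forall>a b. a \<le> b \<longrightarrow> s (g a) \<le> s (g b)"
    proof (intro allI impI)
      fix x y :: nat
      have "s (g x) = s (f N)" unfolding g_def by (rule const[rule_format]) simp
      moreover have "s (g y) = s (f N)" unfolding g_def by (rule const[rule_format]) simp
      ultimately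
      show "s (g x) \<le> s (g y)" by simp
    qed
    ultimately show ?thesis by blast
  qed
qed

lemma multi_mono_sub:
  fixes s :: "nat \<Rightarrow> nat \<Rightarrow> nat"
  shows "\<exists>g::nat\<Rightarrow>nat. strict_mono g \<and> (\<forall>i<k. \<forall>a b. a \<le> b \<longrightarrow> s i (g a) \<le> s i (g b))"
proof (induction k)
  case 0
  have "strict_mono (\<lambda>x::nat. x)" by (simp add: strict_mono_def)
  then show ?case by (intro exI[where x="\<lambda>x::nat. x"]) simp
next
  case (Suc k)
  then obtain g :: "nat \<Rightarrow> nat" where g: "strict_mono g" "\<forall>i<k. \<forall>a b. a \<le> b \<longrightarrow> s i (g a) \<le> s i (g b)" by blast
  obtain h :: "nat \<Rightarrow> nat" where h: "strict_mono h" "\<forall>a b. a \<le> b \<longrightarrow> s k (g (h a)) \<le> s k (g (h b))"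
    using nat_mono_sub[of "\<lambda>n. s k (g n)"] by blast
  have "strict_mono (g \<circ> h)" using g(1) h(1) by (simp add: strict_mono_def)
  moreover have "\<forall>i<Suc k. \<forall>a b. a \<le> b \<longrightarrow> s i ((g \<circ> h) a) \<le> s i ((g \<circ> h) b)"
  proof (intro allI impI)
    fix i a b assume i: "i < Suc k" and ab: "a \<le> (b::nat)"
    have hab: "h a \<le> h b" using h(1) ab by (simp add: strict_mono_less_eq)
    show "s i ((g \<circ> h) a) \<le> s i ((g \<circ> h) b)"
    proof (cases "i < k")
      case True then show ?thesis using g(2) hab by simp
    next
      case False then have "i = k" using i by simp
      then show ?thesis using h(2) ab by simp
    qed
  qed
  ultimately show ?case by blast
qed

lemma dickson:
  fixes f :: "nat \<Rightarrow> (nat \<Rightarrow> nat) \<times> nat"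
  shows "\<exists>i j. i < j \<and> prod_le m (f i) (f j)"
proof -
  define s where "s = (\<lambda>i t. if i < m then fst (f t) i else snd (f t))"
  obtain g :: "nat \<Rightarrow> nat" where g: "strict_mono g" "\<forall>i<Suc m. \<forall>a b. a \<le> b \<longrightarrow> s i (g a) \<le> s i (g b)"
    using multi_mono_sub[where s=s and k="Suc m"] by blast
  have "prod_le m (f (g 0)) (f (g 1))"
    unfolding prod_le_def
  proof
    show "\<forall>i<m. fst (f (g 0)) i \<le> fst (f (g 1)) i"
    proof (intro allI impI)
      fix i assume im: "i < m"
      then have "s i (g 0) \<le> s i (g 1)" using g(2)[rule_format, of i 0 1] by simp
      then show "fst (f (g 0)) i \<le> fst (f (g 1)) i" using im unfolding s_def by simp
    qed
    show "snd (f (g 0)) \<le> snd (f (g 1))"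
      using g(2)[rule_format, of m 0 1] unfolding s_def by simp
  qed
  moreover have "g 0 < g 1" using g(1) by (simp add: strict_mono_def)
  ultimately show ?thesis by blast
qed

definition Cset :: "nat \<Rightarrow> nat \<Rightarrow> nat \<Rightarrow> ((nat \<Rightarrow> nat) \<times> nat) set" where
  "Cset m n B = {x. x \<in> grid m n \<and> weight m (fst x) \<le> B}"

lemma Cset_finite: "finite (Cset m n B)"
proof -
  have "Cset m n B \<subseteq> {f. \<forall>x. (x \<in> {..<m} \<longrightarrow> f x \<in> {..B}) \<and> (x \<notin> {..<m} \<longrightarrow> f x = 0)} \<times> {..<n}"
  proof
    fix x assume x: "x \<in> Cset m n B"
    obtain xi h where xe: "x = (xi, h)" by (cases x)
    have g: "\<forall>i\<ge>m. xi i = 0" "h < n" using x xe unfolding Cset_def grid_def by auto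
    have w: "(\<Sum>i<m. xi i) \<le> B" using x xe unfolding Cset_def weight_def by auto
    have "\<forall>i<m. xi i \<le> B"
    proof (intro allI impI)
      fix i assume "i < m"
      then have "xi i \<le> (\<Sum>i<m. xi i)" by (intro member_le_sum) auto
      then show "xi i \<le> B" using w by simp
    qed
    then show "x \<in> {f. \<forall>x. (x \<in> {..<m} \<longrightarrow> f x \<in> {..B}) \<and> (x \<notin> {..<m} \<longrightarrow> f x = 0)} \<times> {..<n}"
      using g xe by auto
  qed
  moreover have "finite ({f. \<forall>x. (x \<in> {..<m} \<longrightarrow> f x \<in> {..B}) \<and> (x \<notin> {..<m} \<longrightarrow> f x = 0)} \<times> {..<n})"
    by (intro finite_cartesian_product finite_set_of_finite_funs) auto
  ultimately show ?thesis by (rule finite_subset)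
qed

definition Tset :: "nat \<Rightarrow> nat \<Rightarrow> (nat \<Rightarrow> nat) \<Rightarrow> ((nat \<Rightarrow> nat) \<times> nat) list set" where
  "Tset m n b = {ys. \<forall>j<length ys. ys ! j \<in> Cset m n (b j) \<and> (\<forall>i<j. \<not> prod_le m (ys ! i) (ys ! j))}"

lemma Tset_prefix:
  assumes "xs @ zs \<in> Tset m n b" shows "xs \<in> Tset m n b"
  unfolding Tset_def
proof (intro CollectI allI impI conjI)
  have H: "\<forall>j<length (xs@zs). (xs@zs)!j \<in> Cset m n (b j) \<and> (\<forall>i<j. \<not> prod_le m ((xs@zs)!i) ((xs@zs)!j))"
    using assms unfolding Tset_def by blast
  fix j assume j: "j < length xs"
  have jj: "j < length (xs@zs)" using j by simp
  have e: "\<And>i. i \<le> j \<Longrightarrow> (xs@zs)!i = xs!i" using j by (simp add: nth_append)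
  from H jj have A: "(xs@zs)!j \<in> Cset m n (b j)" "\<forall>i<j. \<not> prod_le m ((xs@zs)!i) ((xs@zs)!j)" by blast+
  show "xs ! j \<in> Cset m n (b j)" using A(1) e[of j] by simp
  fix i assume ij: "i < j"
  then have "\<not> prod_le m ((xs@zs)!i) ((xs@zs)!j)" using A(2) by blast
  moreover have "(xs@zs)!i = xs!i" using e[of i] ij by simp
  ultimately show "\<not> prod_le m (xs ! i) (xs ! j)" using e[of j] by simp
qed

definition Pext where "Pext m n b xs \<longleftrightarrow> (\<forall>N. \<exists>zs. xs @ zs \<in> Tset m n b \<and> length zs \<ge> N)"

lemma Pext_step:
  assumes "Pext m n b xs"
  shows "\<exists>c. Pext m n b (xs @ [c])"
proof (rule ccontr)
  assume "\<not> ?thesis"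
  then have "\<forall>c. \<exists>N. \<forall>zs. xs @ [c] @ zs \<in> Tset m n b \<longrightarrow> length zs < N"
  proof (intro allI)
    fix c
    assume nc: "\<not> (\<exists>c. Pext m n b (xs @ [c]))"
    then have "\<not> Pext m n b (xs @ [c])" by blast
    then obtain N where "\<forall>zs. (xs @ [c]) @ zs \<in> Tset m n b \<longrightarrow> \<not> length zs \<ge> N"
      unfolding Pext_def by blast
    then show "\<exists>N. \<forall>zs. xs @ [c] @ zs \<in> Tset m n b \<longrightarrow> length zs < N"
      by (intro exI[of _ N]) (auto simp: not_le)
  qed
  then obtain Nf where Nf: "\<And>c zs. xs @ [c] @ zs \<in> Tset m n b \<Longrightarrow> length zs < Nf c" by metis
  define C where "C = Cset m n (b (length xs))"
  have fC: "finite C" unfolding C_def by (rule Cset_finite)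
  define M where "M = Max (insert 0 (Nf ` C))"
  obtain zs where zs: "xs @ zs \<in> Tset m n b" "length zs \<ge> Suc M"
    using assms unfolding Pext_def by blast
  then obtain c zs' where ze: "zs = c # zs'" by (cases zs) auto
  have cC: "c \<in> C" using zs(1) ze unfolding Tset_def C_def
    by (auto dest!: spec[of _ "length xs"] simp: nth_append)
  have "Nf c \<le> M" unfolding M_def using fC cC by (intro Max_ge) auto
  moreover have "length zs' < Nf c" using Nf[of c zs'] zs(1) ze by simp
  ultimately show False using zs(2) ze by simp
qed

primrec pre :: "nat \<Rightarrow> nat \<Rightarrow> (nat \<Rightarrow> nat) \<Rightarrow> nat \<Rightarrow> ((nat \<Rightarrow> nat) \<times> nat) list" where
  "pre m n b 0 = []"
| "pre m n b (Suc k) = pre m n b k @ [SOME c. Pext m n b (pre m n b k @ [c])]"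

lemma pre_props:
  assumes "Pext m n b []"
  shows "Pext m n b (pre m n b k) \<and> length (pre m n b k) = k"
proof (induction k)
  case 0 then show ?case using assms by simp
next
  case (Suc k)
  then have ex: "\<exists>c. Pext m n b (pre m n b k @ [c])" using Pext_step by blast
  have "Pext m n b (pre m n b k @ [SOME c. Pext m n b (pre m n b k @ [c])])" using someI_ex[OF ex] .
  then show ?case using Suc by simp
qed

lemma pre_len: "length (pre m n b k) = k"
  by (induction k) auto

lemma pre_nth: "j < k \<Longrightarrow> pre m n b k ! j = pre m n b (Suc j) ! j"
proof (induction k)
  case 0 then show ?case by simp
next
  case (Suc k)
  note len = pre_len[of m n b]
  show ?case
  proof (cases "j < k")
    case True
    have "pre m n b (Suc k) ! j = pre m n b k ! j" using True len[of k] by (simp add: nth_append)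
    then show ?thesis using Suc.IH[OF True] by (rule trans)
  next
    case False then have "j = k" using Suc.prems by simp
    then show ?thesis by simp
  qed
qed

lemma bounded_T: "\<exists>N. \<forall>ys\<in>Tset m n b. length ys \<le> N"
proof (rule ccontr)
  assume nb: "\<not> ?thesis"
  have P0: "Pext m n b []" unfolding Pext_def
  proof
    fix N
    from nb obtain ys where "ys \<in> Tset m n b" "\<not> length ys \<le> N" by blast
    then show "\<exists>zs. [] @ zs \<in> Tset m n b \<and> N \<le> length zs" by auto
  qed
  define f where "f j = pre m n b (Suc j) ! j" for j
  obtain i j where ij: "i < j" "prod_le m (f i) (f j)" using dickson[of m f] by blast
  have PT: "pre m n b (Suc j) \<in> Tset m n b"
  proof -
    have "Pext m n b (pre m n b (Suc j))" using pre_props[OF P0, of "Suc j"] by blast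
    then obtain zs where "pre m n b (Suc j) @ zs \<in> Tset m n b" unfolding Pext_def by blast
    then show ?thesis by (rule Tset_prefix)
  qed
  have len: "length (pre m n b (Suc j)) = Suc j" using pre_props[OF P0] by blast
  have "\<not> prod_le m (pre m n b (Suc j) ! i) (pre m n b (Suc j) ! j)"
    using PT ij(1) len unfolding Tset_def by auto
  moreover have "pre m n b (Suc j) ! i = f i"
  proof -
    have "i < Suc j" using ij(1) by simp
    from pre_nth[OF this, of m n b] show ?thesis unfolding f_def .
  qed
  ultimately show False using ij(2) unfolding f_def by simp
qed

theorem lemma4p9:
  fixes m n :: nat and a :: "nat \<Rightarrow> nat"
  assumes "m > 0" and "n > 0" and "\<forall>i. a i > 0"
  shows "\<exists>N::nat. \<forall>(L::nat) (S :: nat \<Rightarrow> ((nat \<Rightarrow> nat) \<times> nat) set).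
           (\<forall>k\<le>L. S k \<subseteq> grid m n \<and> antichain_in m (S k)
                    \<and> S k \<subseteq> {(xi, h). weight m xi \<le> a k})
         \<and> (\<forall>k<L. S k \<subset> S (Suc k))
         \<longrightarrow> L \<le> N"
proof -
  define b where "b j = a (Suc j)" for j
  obtain N where N: "\<forall>ys\<in>Tset m n b. length ys \<le> N" using bounded_T by blast
  show ?thesis
  proof (intro exI allI impI)
    fix L and S :: "nat \<Rightarrow> ((nat \<Rightarrow> nat) \<times> nat) set"
    assume H: "(\<forall>k\<le>L. S k \<subseteq> grid m n \<and> antichain_in m (S k)
                    \<and> S k \<subseteq> {(xi, h). weight m xi \<le> a k})
         \<and> (\<forall>k<L. S k \<subset> S (Suc k))"
    have mono: "S i \<subseteq> S j" if "i \<le> j" "j \<le> L" for i j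
      using that
    proof (induction j)
      case 0 then show ?case by simp
    next
      case (Suc j)
      show ?case
      proof (cases "i = Suc j")
        case True then show ?thesis by simp
      next
        case False
        then have "S i \<subseteq> S j" using Suc by simp
        moreover have "S j \<subseteq> S (Suc j)"
        proof -
          have "j < L" using Suc(3) by simp
          then have "S j \<subset> S (Suc j)" using H by blast
          then show ?thesis by blast
        qed
        ultimately show ?thesis by blast
      qed
    qed
    have "\<forall>k<L. \<exists>y. y \<in> S (Suc k) \<and> y \<notin> S k" using H by blast
    then obtain y where y: "\<And>k. k < L \<Longrightarrow> y k \<in> S (Suc k) \<and> y k \<notin> S k" by metis
    define ys where "ys = map y [0..<L]"
    have "ys \<in> Tset m n b"
      unfolding Tset_def
    proof (intro CollectI allI impI conjI)
      fix j assume j: "j < length ys"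
      then have jL: "j < L" unfolding ys_def by simp
      have yj: "y j \<in> S (Suc j)" "y j \<notin> S j" using y[OF jL] by auto
      have ysj: "ys ! j = y j" using jL unfolding ys_def by simp
      have HS: "S (Suc j) \<subseteq> grid m n" "antichain_in m (S (Suc j))"
           "S (Suc j) \<subseteq> {(xi, h). weight m xi \<le> a (Suc j)}" using H jL by auto
      show "ys ! j \<in> Cset m n (b j)"
        using yj(1) HS(1,3) ysj unfolding Cset_def b_def by (cases "y j") auto
      fix i assume ij: "i < j"
      have ysi: "ys ! i = y i" using ij jL unfolding ys_def by simp
      have yi: "y i \<in> S (Suc i)" using y ij jL by auto
      have "S (Suc i) \<subseteq> S j" using mono ij jL by simp
      then have "y i \<in> S j" "y i \<in> S (Suc j)" using yi mono[of j "Suc j"] jL by auto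
      then have "y i \<noteq> y j" using yj by auto
      then show "\<not> prod_le m (ys ! i) (ys ! j)"
        using HS(2) \<open>y i \<in> S (Suc j)\<close> yj(1) ysi ysj unfolding antichain_in_def by auto
    qed
    then show "L \<le> N" using N unfolding ys_def by fastforce
  qed
qed

end
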